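(* Let $(\mathbf A,\perp,\{\mathsf{t},\mathsf{f}\})$ be an $\mathfrak{N}_w^1$-model. For all $x,y,z\in A$: $x\otimes y\precsim z$ iff $x\precsim y\supset z$. Consequently, $(A,\precsim,\otimes,\supset,{}^{*})$ is a partially ordered commutative involutive residuated groupoid.
   Context: A weak $\mathcal{N}$-algebra is an algebra $(A,\otimes,\circ,{}^{*})$ of type $(2,2,1)$ with $\otimes,\circ$ commutative (not necessarily associative), $x^{**}=x$, and $(x\otimes y)\circ z=(x\otimes z)\circ y$. Term operations: $x\Rightarrow y:=(x\circ y^{*})^{*}$, $x\Leftrightarrow y:=(x\Rightarrow y)\otimes(y\Rightarrow x)$, $x\not\Leftrightarrow y:=(x\Leftrightarrow y)^{*}$, $x\not\Leftrightarrow y\not\Leftrightarrow z:=((x\not\Leftrightarrow y)\otimes(x\not\Leftrightarrow z))\otimes(y\not\Leftrightarrow z)$, $x\oplus y:=(x^{*}\otimes y^{*})^{*}$, $x\supset y:=x^{*}\oplus y$. With $\mathsf{t}\ne\mathsf{f}$ symbols not in $A$, $\overline A=A\cup\{\mathsf{t},\mathsf{f}\}$, an $\mathfrak{N}_w$-model is $(\mathbf A,\perp,\{\mathsf{t},\mathsf{f}\})$, $\mathbf A$ a weak $\mathcal{N}$-algebra, $\perp\subseteq\overline A\times\overline A$, such that for all $x,y,z\in A$: (a) $x\perp x^{*}$; (b) $x\perp y^{*}$ and $y\perp x^{*}$ imply $x=y$; (c) $x\perp y$ iff $x\circ y\perp\mathsf{t}$; (d) $x\perp\mathsf{t}$ iff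 $x^{*}\perp\mathsf{f}$; (e) $x\perp\mathsf{f}$ and $y\perp\mathsf{f}$ iff $x\otimes y\perp\mathsf{f}$; (f) $(x\circ y^{*})^{*}\perp(x\circ y)^{*}$; (g) $x\perp y$ and $x\perp\mathsf{f}$ imply $y\perp\mathsf{t}$; (h) $(x\not\Leftrightarrow y\not\Leftrightarrow z)\perp((x\Rightarrow y)\Rightarrow((y\Rightarrow z)\Rightarrow(x\Rightarrow z)))^{*}$. An $\mathfrak{N}_w^1$-model is an $\mathfrak{N}_w$-model such that for all $x,y,z\in A$: $x\perp\mathsf{f}$ implies $x\oplus y\perp\mathsf{f}$; and $x\perp y^{*}$, $y\perp z^{*}$ imply $x\perp z^{*}$. On $A$ define $x\precsim y$ iff $x\perp y^{*}$. A partially ordered commutative involutive residuated groupoid is a structure $(A,\leq,\otimes,\supset,{}^{*})$ where $(A,\otimes)$ is a commutative groupoid, $(A,\leq)$ is a poset, ${}^{*}$ is an antitone involution ($x^{**}=x$ and $x\leq y$ implies $y^{*}\leq x^{*}$), and $x\otimes y\leq z$ iff $x\leq y\supset z$ for all $x,y,z$. *)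

theory Defs
  imports Main
begin

text \<open>The carrier A is the whole type 'a. The extended carrier A \<union> {t, f}
  is the type 'a ext, with t and f fresh elements.\<close>

datatype 'a ext = El 'a | T_el | F_el

definition weak_N_algebra ::
  "('a \<Rightarrow> 'a \<Rightarrow> 'a) \<Rightarrow> ('a \<Rightarrow> 'a \<Rightarrow> 'a) \<Rightarrow> ('a \<Rightarrow> 'a) \<Rightarrow> bool" where
  "weak_N_algebra ot ci st \<longleftrightarrow>
     (\<forall>x y. ot x y = ot y x) \<and> (\<forall>x y. ci x y = ci y x) \<and>
     (\<forall>x. st (st x) = x) \<and>
     (\<forall>x y z. ci (ot x y) z = ci (ot x z) y)"

definition imp_op :: "('a \<Rightarrow> 'a \<Rightarrow> 'a) \<Rightarrow> ('a \<Rightarrow> 'a) \<Rightarrow> 'a \<Rightarrow> 'a \<Rightarrow> 'a" where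
  "imp_op ci st x y = st (ci x (st y))"

definition iff_op ::
  "('a \<Rightarrow> 'a \<Rightarrow> 'a) \<Rightarrow> ('a \<Rightarrow> 'a \<Rightarrow> 'a) \<Rightarrow> ('a \<Rightarrow> 'a) \<Rightarrow> 'a \<Rightarrow> 'a \<Rightarrow> 'a" where
  "iff_op ot ci st x y = ot (imp_op ci st x y) (imp_op ci st y x)"

definition niff_op ::
  "('a \<Rightarrow> 'a \<Rightarrow> 'a) \<Rightarrow> ('a \<Rightarrow> 'a \<Rightarrow> 'a) \<Rightarrow> ('a \<Rightarrow> 'a) \<Rightarrow> 'a \<Rightarrow> 'a \<Rightarrow> 'a" where
  "niff_op ot ci st x y = st (iff_op ot ci st x y)"

definition niff3_op ::
  "('a \<Rightarrow> 'a \<Rightarrow> 'a) \<Rightarrow> ('a \<Rightarrow> 'a \<Rightarrow> 'a) \<Rightarrow> ('a \<Rightarrow> 'a) \<Rightarrow> 'a \<Rightarrow> 'a \<Rightarrow> 'a \<Rightarrow> 'a" where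
  "niff3_op ot ci st x y z =
     ot (ot (niff_op ot ci st x y) (niff_op ot ci st x z)) (niff_op ot ci st y z)"

definition oplus_op :: "('a \<Rightarrow> 'a \<Rightarrow> 'a) \<Rightarrow> ('a \<Rightarrow> 'a) \<Rightarrow> 'a \<Rightarrow> 'a \<Rightarrow> 'a" where
  "oplus_op ot st x y = st (ot (st x) (st y))"

definition supset_op :: "('a \<Rightarrow> 'a \<Rightarrow> 'a) \<Rightarrow> ('a \<Rightarrow> 'a) \<Rightarrow> 'a \<Rightarrow> 'a \<Rightarrow> 'a" where
  "supset_op ot st x y = oplus_op ot st (st x) y"

definition Nw_model ::
  "('a \<Rightarrow> 'a \<Rightarrow> 'a) \<Rightarrow> ('a \<Rightarrow> 'a \<Rightarrow> 'a) \<Rightarrow> ('a \<Rightarrow> 'a) \<Rightarrow>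
   ('a ext \<Rightarrow> 'a ext \<Rightarrow> bool) \<Rightarrow> bool" where
  "Nw_model ot ci st perp \<longleftrightarrow> weak_N_algebra ot ci st \<and>
    (\<forall>x. perp (El x) (El (st x))) \<and>
    (\<forall>x y. perp (El x) (El (st y)) \<and> perp (El y) (El (st x)) \<longrightarrow> x = y) \<and>
    (\<forall>x y. perp (El x) (El y) \<longleftrightarrow> perp (El (ci x y)) T_el) \<and>
    (\<forall>x. perp (El x) T_el \<longleftrightarrow> perp (El (st x)) F_el) \<and>
    (\<forall>x y. (perp (El x) F_el \<and> perp (El y) F_el) \<longleftrightarrow> perp (El (ot x y)) F_el) \<and>
    (\<forall>x y. perp (El (st (ci x (st y)))) (El (st (ci x y)))) \<and>
    (\<forall>x y. perp (El x) (El y) \<and> perp (El x) F_el \<longrightarrow> perp (El y) T_el) \<and>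
    (\<forall>x y z. perp (El (niff3_op ot ci st x y z))
        (El (st (imp_op ci st (imp_op ci st x y)
                 (imp_op ci st (imp_op ci st y z) (imp_op ci st x z))))))"

definition Nw1_model ::
  "('a \<Rightarrow> 'a \<Rightarrow> 'a) \<Rightarrow> ('a \<Rightarrow> 'a \<Rightarrow> 'a) \<Rightarrow> ('a \<Rightarrow> 'a) \<Rightarrow>
   ('a ext \<Rightarrow> 'a ext \<Rightarrow> bool) \<Rightarrow> bool" where
  "Nw1_model ot ci st perp \<longleftrightarrow> Nw_model ot ci st perp \<and>
    (\<forall>x y. perp (El x) F_el \<longrightarrow> perp (El (oplus_op ot st x y)) F_el) \<and>
    (\<forall>x y z. perp (El x) (El (st y)) \<and> perp (El y) (El (st z)) \<longrightarrow> perp (El x) (El (st z)))"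

definition prec_rel :: "('a \<Rightarrow> 'a) \<Rightarrow> ('a ext \<Rightarrow> 'a ext \<Rightarrow> bool) \<Rightarrow> 'a \<Rightarrow> 'a \<Rightarrow> bool" where
  "prec_rel st perp x y \<longleftrightarrow> perp (El x) (El (st y))"

definition po_comm_inv_res_groupoid ::
  "('a \<Rightarrow> 'a \<Rightarrow> bool) \<Rightarrow> ('a \<Rightarrow> 'a \<Rightarrow> 'a) \<Rightarrow> ('a \<Rightarrow> 'a \<Rightarrow> 'a) \<Rightarrow> ('a \<Rightarrow> 'a) \<Rightarrow> bool" where
  "po_comm_inv_res_groupoid le ot res st \<longleftrightarrow>
    (\<forall>x y. ot x y = ot y x) \<and>
    (\<forall>x. le x x) \<and> (\<forall>x y. le x y \<and> le y x \<longrightarrow> x = y) \<and>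
    (\<forall>x y z. le x y \<and> le y z \<longrightarrow> le x z) \<and>
    (\<forall>x. st (st x) = x) \<and> (\<forall>x y. le x y \<longrightarrow> le (st y) (st x)) \<and>
    (\<forall>x y z. le (ot x y) z \<longleftrightarrow> le x (res y z))"

end

theory Submission
  imports Defs
begin

theorem proposition6p14:
  fixes ot ci :: "'a \<Rightarrow> 'a \<Rightarrow> 'a" and st :: "'a \<Rightarrow> 'a"
    and perp :: "'a ext \<Rightarrow> 'a ext \<Rightarrow> bool"
  assumes "Nw1_model ot ci st perp"
  shows "(\<forall>x y z. prec_rel st perp (ot x y) z \<longleftrightarrow> prec_rel st perp x (supset_op ot st y z))
    \<and> po_comm_inv_res_groupoid (prec_rel st perp) ot (supset_op ot st) st"
proof -
  have N: "Nw_model ot ci st perp" using assms unfolding Nw1_model_def by blast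
  have W: "weak_N_algebra ot ci st" using N unfolding Nw_model_def by blast


  have otc: "\<And>x y. ot x y = ot y x" using W unfolding weak_N_algebra_def by blast
  have cic: "\<And>x y. ci x y = ci y x" using W unfolding weak_N_algebra_def by blast
  have inv: "\<And>x. st (st x) = x" using W unfolding weak_N_algebra_def by blast
  have ax: "\<And>x y z. ci (ot x y) z = ci (ot x z) y" using W unfolding weak_N_algebra_def by blast
  have a: "\<And>x. perp (El x) (El (st x))" using N unfolding Nw_model_def by blast
  have b: "\<And>x y. perp (El x) (El (st y)) \<Longrightarrow> perp (El y) (El (st x)) \<Longrightarrow> x = y"
    using N unfolding Nw_model_def by blast
  have c: "\<And>x y. perp (El x) (El y) \<longleftrightarrow> perp (El (ci x y)) T_el"
    using N unfolding Nw_model_def by blast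
  have tr: "\<And>x y z. perp (El x) (El (st y)) \<Longrightarrow> perp (El y) (El (st z)) \<Longrightarrow> perp (El x) (El (st z))"
    using assms unfolding Nw1_model_def by blast
  have sym: "perp (El y) (El x)" if "perp (El x) (El y)" for x y
  proof -
    have "perp (El (ci x y)) T_el" using that c by simp
    then have "perp (El (ci y x)) T_el" by (simp add: cic)
    then show ?thesis using c by simp
  qed
  have res: "prec_rel st perp (ot x y) z \<longleftrightarrow> prec_rel st perp x (supset_op ot st y z)" for x y z
  proof -
    have "ci x (ot y (st z)) = ci (ot x y) (st z)"
      by (simp add: cic[of x] ax otc[of x y])
    then show ?thesis
      unfolding prec_rel_def supset_op_def oplus_op_def inv by (simp add: c)
  qed
  have anti: "prec_rel st perp (st y) (st x)" if "prec_rel st perp x y" for x y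
    using sym[OF that[unfolded prec_rel_def]] unfolding prec_rel_def inv .
  show ?thesis
    unfolding po_comm_inv_res_groupoid_def
    using res otc inv anti
    by (auto simp: prec_rel_def a intro: b tr)
qed

end
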